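(* Let $S$ be a set of $k$ vertices carrying a $d$-regular bipartite graph with adjacency matrix $A|_{S\times S}$, where $d=\gamma pk$, $\gamma\ge1/2$ and $p\ge5\left(\frac{\log k}{\gamma^4k}\right)^{1/6}$. Let $\tau\ge d/2$, let $\mathbf v^{(1)},\dots,\mathbf v^{(L)}$ ($L=L_{-\tau}\ge1$) be orthonormal eigenvectors of $A|_{S\times S}$ spanning the eigenspaces with eigenvalue $\le-\tau$, and let $\mathbf w^{(i)}$, $i\in S$, be the spectral embedding vectors. Let $N\subseteq S$ be a random subset containing each $i\in S$ independently with probability $p$ (e.g. $N=N(j)\cap S$ for fixed $j\in V\setminus S$). Then for an arbitrary unit vector $\mathbf y\in\mathbb R^L$, with probability at least $1-O(1/k^4)$, $$\sum_{i\in N}\langle\mathbf y,\mathbf w^{(i)}\rangle^2\ge \frac p2.$$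
   Context: Spectral embedding: let $W$ be the $L\times k$ matrix whose rows are $\mathbf v^{(1)},\dots,\mathbf v^{(L)}$ (indexed by $S$); for $i\in S$, $\mathbf w^{(i)}\in\mathbb R^L$ is the $i$-th column of $W$, i.e. $w^{(i)}_r=v^{(r)}_i$. *)

theory Defs
  imports Complex_Main
begin

definition adj :: "(nat \<Rightarrow> nat \<Rightarrow> bool) \<Rightarrow> nat \<Rightarrow> nat \<Rightarrow> real" where
  "adj E i j = (if E i j then 1 else 0)"

definition simple_graph_on :: "nat set \<Rightarrow> (nat \<Rightarrow> nat \<Rightarrow> bool) \<Rightarrow> bool" where
  "simple_graph_on S E \<longleftrightarrow> (\<forall>i j. E i j \<longrightarrow> i \<in> S \<and> j \<in> S) \<and>
     (\<forall>i j. E i j \<longrightarrow> E j i) \<and> (\<forall>i. \<not> E i i)"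

definition bipartite_on :: "nat set \<Rightarrow> (nat \<Rightarrow> nat \<Rightarrow> bool) \<Rightarrow> bool" where
  "bipartite_on S E \<longleftrightarrow> (\<exists>X \<subseteq> S. \<forall>i\<in>S. \<forall>j\<in>S. E i j \<longrightarrow> (i \<in> X \<longleftrightarrow> j \<notin> X))"

definition regular_on :: "nat set \<Rightarrow> (nat \<Rightarrow> nat \<Rightarrow> bool) \<Rightarrow> nat \<Rightarrow> bool" where
  "regular_on S E d \<longleftrightarrow> (\<forall>i\<in>S. card {j\<in>S. E i j} = d)"

definition is_eigvec_on :: "nat set \<Rightarrow> (nat \<Rightarrow> nat \<Rightarrow> real) \<Rightarrow> real \<Rightarrow> (nat \<Rightarrow> real) \<Rightarrow> bool" where
  "is_eigvec_on S M \<mu> x \<longleftrightarrow> (\<exists>i\<in>S. x i \<noteq> 0) \<and> (\<forall>i\<in>S. (\<Sum>j\<in>S. M i j * x j) = \<mu> * x i)"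

text \<open>Probability that a random subset N of S, containing each element independently
  with probability p, satisfies P (product Bernoulli measure).\<close>
definition subset_prob :: "real \<Rightarrow> nat set \<Rightarrow> (nat set \<Rightarrow> bool) \<Rightarrow> real" where
  "subset_prob p S P = (\<Sum>N\<in>Pow S. if P N then p ^ card N * (1 - p) ^ (card S - card N) else 0)"

end

theory Submission
  imports Defs
begin

lemma weight_prod:
  fixes p :: real
  assumes "finite S"
  shows "(\<Sum>N\<in>Pow S. p^card N * (1-p)^(card S - card N) * (\<Prod>i\<in>N. f i)) = (\<Prod>i\<in>S. (1 - p + p * f i))"
  using assms
proof (induction S rule: finite_induct)
  case empty show ?case by simp
next
  case (insert x S)
  have disj: "Pow S \<inter> insert x ` Pow S = {}" using insert.hyps by auto
  have inj: "inj_on (insert x) (Pow S)" using insert.hyps unfolding inj_on_def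
    by (metis Pow_iff insert_ident subsetD)
  let ?g = "\<lambda>N. p^card N * (1-p)^(card S - card N) * (\<Prod>i\<in>N. f i)"
  have A: "p^card N * (1-p)^(card (insert x S) - card N) * (\<Prod>i\<in>N. f i) = (1-p) * ?g N"
    if "N \<in> Pow S" for N
  proof -
    have "card N \<le> card S" using that insert.hyps by (simp add: card_mono)
    then have "card (insert x S) - card N = Suc (card S - card N)" using insert.hyps by simp
    then show ?thesis by simp
  qed
  have B: "p^card (insert x N) * (1-p)^(card (insert x S) - card (insert x N)) * (\<Prod>i\<in>insert x N. f i) = (p * f x) * ?g N"
    if "N \<in> Pow S" for N
  proof -
    have fN: "finite N" "x \<notin> N" using that insert.hyps finite_subset by auto
    then show ?thesis using insert.hyps by (simp add: fN)
  qed
  have "(\<Sum>N\<in>Pow (insert x S). p^card N * (1-p)^(card (insert x S) - card N) * (\<Prod>i\<in>N. f i))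
     = (\<Sum>N\<in>Pow S. p^card N * (1-p)^(card (insert x S) - card N) * (\<Prod>i\<in>N. f i))
       + (\<Sum>N\<in>insert x ` Pow S. p^card N * (1-p)^(card (insert x S) - card N) * (\<Prod>i\<in>N. f i))"
    unfolding Pow_insert using disj insert.hyps by (simp add: sum.union_disjoint)
  also have "\<dots> = (\<Sum>N\<in>Pow S. (1-p) * ?g N) + (\<Sum>N\<in>Pow S. (p * f x) * ?g N)"
  proof -
    have 1: "(\<Sum>N\<in>Pow S. p^card N * (1-p)^(card (insert x S) - card N) * (\<Prod>i\<in>N. f i)) = (\<Sum>N\<in>Pow S. (1-p) * ?g N)"
      by (rule sum.cong[OF refl A])
    have 2: "(\<Sum>N\<in>insert x ` Pow S. p^card N * (1-p)^(card (insert x S) - card N) * (\<Prod>i\<in>N. f i)) = (\<Sum>N\<in>Pow S. (p * f x) * ?g N)"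
      unfolding sum.reindex[OF inj] comp_def by (rule sum.cong[OF refl B])
    show ?thesis using 1 2 by simp
  qed
  also have "\<dots> = (1-p) * (\<Sum>N\<in>Pow S. ?g N) + (p * f x) * (\<Sum>N\<in>Pow S. ?g N)"
    by (simp only: sum_distrib_left)
  also have "\<dots> = (1 - p + p * f x) * (\<Sum>N\<in>Pow S. ?g N)"
    by (simp add: algebra_simps)
  finally show ?case using insert by simp
qed

lemma norm_comb:
  fixes v :: "nat \<Rightarrow> nat \<Rightarrow> real"
  assumes "\<forall>r<L. \<forall>s<L. (\<Sum>i\<in>S. v r i * v s i) = (if r = s then 1 else 0)"
  shows "(\<Sum>j\<in>S. (\<Sum>r<L. c r * v r j)\<^sup>2) = (\<Sum>r<L. (c r)\<^sup>2)"
proof -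
  have "(\<Sum>j\<in>S. (\<Sum>r<L. c r * v r j)\<^sup>2) = (\<Sum>j\<in>S. \<Sum>r<L. \<Sum>s<L. c r * c s * (v r j * v s j))"
    by (simp add: power2_eq_square sum_product algebra_simps)
  also have "\<dots> = (\<Sum>r<L. \<Sum>s<L. c r * c s * (\<Sum>j\<in>S. v r j * v s j))"
    by (simp add: sum_distrib_left sum.swap[of _ S])
  also have "\<dots> = (\<Sum>r<L. \<Sum>s<L. if r = s then c r * c s else 0)"
    using assms by (intro sum.cong refl) auto
  also have "\<dots> = (\<Sum>r<L. (c r)\<^sup>2)"
    by (simp add: power2_eq_square)
  finally show ?thesis .
qed

lemma bessel:
  fixes v :: "nat \<Rightarrow> nat \<Rightarrow> real"
  assumes "\<forall>r<L. \<forall>s<L. (\<Sum>i\<in>S. v r i * v s i) = (if r = s then 1 else 0)"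
  shows "(\<Sum>r<L. (\<Sum>j\<in>S. x j * v r j)\<^sup>2) \<le> (\<Sum>j\<in>S. (x j)\<^sup>2)"
proof -
  define c where "c r = (\<Sum>j\<in>S. x j * v r j)" for r
  have "0 \<le> (\<Sum>j\<in>S. (x j - (\<Sum>r<L. c r * v r j))\<^sup>2)" by (simp add: sum_nonneg)
  also have "\<dots> = (\<Sum>j\<in>S. (x j)\<^sup>2) - 2 * (\<Sum>j\<in>S. x j * (\<Sum>r<L. c r * v r j)) + (\<Sum>j\<in>S. (\<Sum>r<L. c r * v r j)\<^sup>2)"
    by (simp add: power2_diff sum.distrib sum_subtractf sum_distrib_left mult.assoc)
  also have "(\<Sum>j\<in>S. x j * (\<Sum>r<L. c r * v r j)) = (\<Sum>r<L. (c r)\<^sup>2)"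
  proof -
    have "(\<Sum>j\<in>S. x j * (\<Sum>r<L. c r * v r j)) = (\<Sum>j\<in>S. \<Sum>r<L. c r * (x j * v r j))"
      by (simp add: sum_distrib_left mult.left_commute)
    also have "\<dots> = (\<Sum>r<L. \<Sum>j\<in>S. c r * (x j * v r j))" by (rule sum.swap)
    also have "\<dots> = (\<Sum>r<L. (c r)\<^sup>2)"
      by (simp add: sum_distrib_left[symmetric] c_def power2_eq_square)
    finally show ?thesis .
  qed
  also have "(\<Sum>j\<in>S. (\<Sum>r<L. c r * v r j)\<^sup>2) = (\<Sum>r<L. (c r)\<^sup>2)"
    using norm_comb[OF assms] .
  finally show ?thesis unfolding c_def by simp
qed



lemma cs_sum:
  fixes a b :: "nat \<Rightarrow> real"
  shows "(\<Sum>i\<in>I. a i * b i)\<^sup>2 \<le> (\<Sum>i\<in>I. (a i)\<^sup>2) * (\<Sum>i\<in>I. (b i)\<^sup>2)"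
proof -
  have t: "(a r * b s - a s * b r)\<^sup>2 = (a r)\<^sup>2 * (b s)\<^sup>2 + (b r)\<^sup>2 * (a s)\<^sup>2 - 2 * ((a r * b r) * (a s * b s))" for r s
    by (simp add: power2_eq_square algebra_simps)
  have "0 \<le> (\<Sum>r\<in>I. \<Sum>s\<in>I. (a r * b s - a s * b r)\<^sup>2)" by (simp add: sum_nonneg)
  also have "\<dots> = (\<Sum>r\<in>I. \<Sum>s\<in>I. (a r)\<^sup>2 * (b s)\<^sup>2) + (\<Sum>r\<in>I. \<Sum>s\<in>I. (b r)\<^sup>2 * (a s)\<^sup>2)
       - 2 * (\<Sum>r\<in>I. \<Sum>s\<in>I. (a r * b r) * (a s * b s))"
    by (simp only: t sum.distrib sum_subtractf sum_distrib_left)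
  also have "\<dots> = 2 * ((\<Sum>i\<in>I. (a i)\<^sup>2) * (\<Sum>i\<in>I. (b i)\<^sup>2)) - 2 * (\<Sum>i\<in>I. a i * b i)\<^sup>2"
    by (simp only: sum_product[symmetric] power2_eq_square[of "sum _ _"]) (simp add: algebra_simps)
  finally show ?thesis by simp
qed


lemma factor_bound:
  fixes p s :: real
  assumes "0 \<le> p" "p \<le> 1" "0 \<le> s" "s \<le> 1/3"
  shows "1 - p + p * exp (- s) \<le> exp (- (3/4 * p * s))"
proof -
  have e: "exp (- s) \<le> 1 / (1 + s)"
  proof -
    have "1 + s \<le> exp s" by (rule exp_ge_add_one_self)
    then have "1 / exp s \<le> 1 / (1 + s)" using assms by (intro divide_left_mono) auto
    then show ?thesis by (simp only: exp_minus')
  qed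
  have f: "1 / (1 + s) \<le> 1 - 3/4 * s"
  proof -
    have "0 \<le> s * (1 - 3 * s)" using assms by (intro mult_nonneg_nonneg) auto
    moreover have "(1 - 3/4 * s) * (1 + s) = 1 + s * (1 - 3 * s) / 4" by (simp add: field_simps)
    ultimately have "1 \<le> (1 - 3/4 * s) * (1 + s)" by linarith
    moreover have "0 < 1 + s" using assms by linarith
    ultimately show ?thesis by (simp only: pos_divide_le_eq)
  qed
  have "p * exp (- s) \<le> p * (1 - 3/4 * s)"
    by (rule mult_left_mono) (use e f assms in linarith)+
  then have "1 - p + p * exp (- s) \<le> 1 + (- (3/4 * p * s))" by (simp add: algebra_simps)
  also have "\<dots> \<le> exp (- (3/4 * p * s))" by (rule exp_ge_add_one_self)
  finally show ?thesis .
qed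
lemma tail:
  fixes a :: "nat \<Rightarrow> real"
  assumes fin: "finite S" and p: "0 \<le> p" "p \<le> 1" and t: "0 \<le> t"
    and a: "\<And>i. i \<in> S \<Longrightarrow> 0 \<le> a i" "\<And>i. i \<in> S \<Longrightarrow> t * a i \<le> 1/3"
    and sa: "(\<Sum>i\<in>S. a i) = 1"
  shows "subset_prob p S (\<lambda>N. (\<Sum>i\<in>N. a i) \<ge> p/2) \<ge> 1 - exp (- (p * t / 4))"
proof -
  define w where "w (N::nat set) = p^card N * (1-p)^(card S - card N)" for N
  have w0: "0 \<le> w N" for N unfolding w_def using p by simp
  have tot: "(\<Sum>N\<in>Pow S. w N) = 1"
    using weight_prod[OF fin, of p "\<lambda>_. 1"] unfolding w_def by simp
  let ?P = "\<lambda>N. (\<Sum>i\<in>N. a i) \<ge> p/2"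
  have "subset_prob p S ?P + subset_prob p S (\<lambda>N. \<not> ?P N) = (\<Sum>N\<in>Pow S. w N)"
    unfolding subset_prob_def w_def[symmetric] sum.distrib[symmetric]
    by (rule sum.cong) auto
  then have split: "subset_prob p S ?P + subset_prob p S (\<lambda>N. \<not> ?P N) = 1" using tot by simp
  have "subset_prob p S (\<lambda>N. \<not> ?P N) \<le> (\<Sum>N\<in>Pow S. w N * (exp (t * p / 2) * (\<Prod>i\<in>N. exp (- t * a i))))"
    unfolding subset_prob_def w_def[symmetric]
  proof (rule sum_mono)
    fix N assume N: "N \<in> Pow S"
    then have fN: "finite N" using fin finite_subset by auto
    have eq: "exp (t * p / 2) * (\<Prod>i\<in>N. exp (- t * a i)) = exp (t * (p/2 - (\<Sum>i\<in>N. a i)))"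
      by (simp add: exp_sum[OF fN, symmetric] exp_add[symmetric] sum_distrib_left sum_negf algebra_simps)
    show "(if \<not> ?P N then w N else 0) \<le> w N * (exp (t * p / 2) * (\<Prod>i\<in>N. exp (- t * a i)))"
    proof (cases "?P N")
      case True then show ?thesis using w0[of N] by (simp add: prod_nonneg)
    next
      case False
      then have "1 \<le> exp (t * (p/2 - (\<Sum>i\<in>N. a i)))" using t by simp
      then have "w N * 1 \<le> w N * exp (t * (p/2 - (\<Sum>i\<in>N. a i)))"
        using w0[of N] by (intro mult_left_mono) auto
      then show ?thesis using False eq by simp
    qed
  qed
  also have "\<dots> = exp (t * p / 2) * (\<Sum>N\<in>Pow S. w N * (\<Prod>i\<in>N. exp (- t * a i)))"
    by (simp add: sum_distrib_left algebra_simps)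
  also have "(\<Sum>N\<in>Pow S. w N * (\<Prod>i\<in>N. exp (- t * a i))) = (\<Prod>i\<in>S. (1 - p + p * exp (- t * a i)))"
    unfolding w_def by (rule weight_prod[OF fin])
  also have "\<dots> \<le> (\<Prod>i\<in>S. exp (- (3/4 * p * (t * a i))))"
  proof (rule prod_mono)
    fix i assume i: "i \<in> S"
    have "0 \<le> t * a i" using t a(1)[OF i] by simp
    moreover have "0 \<le> 1 - p + p * exp (- t * a i)" using p by (simp add: add_nonneg_nonneg)
    ultimately show "0 \<le> 1 - p + p * exp (- t * a i) \<and> 1 - p + p * exp (- t * a i) \<le> exp (- (3/4 * p * (t * a i)))"
      using factor_bound[OF p, of "t * a i"] a(2)[OF i] by simp
  qed
  also have "\<dots> = exp (- (3/4 * p * t))"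
  proof -
    have "(\<Sum>i\<in>S. - (3/4 * p * (t * a i))) = (\<Sum>i\<in>S. (- (3/4 * p * t)) * a i)"
      by (rule sum.cong) (simp_all add: algebra_simps)
    also have "\<dots> = - (3/4 * p * t)" by (simp only: sum_distrib_left[symmetric] sa mult_1_right)
    finally show ?thesis by (simp only: exp_sum[OF fin, symmetric])
  qed
  finally have "subset_prob p S (\<lambda>N. \<not> ?P N) \<le> exp (t * p / 2) * exp (- (3/4 * p * t))"
    by (simp add: mult_left_mono)
  also have "\<dots> = exp (- (p * t / 4))" by (simp add: exp_add[symmetric] algebra_simps)
  finally show ?thesis using split by simp
qed


lemma sp_nonneg:
  assumes "0 \<le> p" "p \<le> 1"
  shows "0 \<le> subset_prob p S P"
  unfolding subset_prob_def using assms by (intro sum_nonneg) auto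

lemma adj_sq_sum:
  assumes "finite S"
  shows "(\<Sum>j\<in>S. (adj E i j)\<^sup>2) = real (card {j\<in>S. E i j})"
proof -
  have "(\<Sum>j\<in>S. (adj E i j)\<^sup>2) = (\<Sum>j\<in>S. if E i j then 1 else 0)"
    by (rule sum.cong) (auto simp: adj_def)
  also have "\<dots> = real (card {j\<in>S. E i j})"
  proof -
    have "{j\<in>S. E i j} = S \<inter> Collect (E i)" by auto
    then show ?thesis using assms by (simp add: sum.If_cases)
  qed
  finally show ?thesis .
qed

theorem lemma2p12:
  "\<exists>C::real. \<forall>(k::nat) (S::nat set) (E::nat \<Rightarrow> nat \<Rightarrow> bool) (d::nat) (\<gamma>::real) (p::real)
      (\<tau>::real) (L::nat) (v::nat \<Rightarrow> nat \<Rightarrow> real) (y::nat \<Rightarrow> real).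
    finite S \<and> card S = k \<and>
    simple_graph_on S E \<and> bipartite_on S E \<and> regular_on S E d \<and>
    real d = \<gamma> * p * real k \<and> \<gamma> \<ge> 1/2 \<and> 0 \<le> p \<and> p \<le> 1 \<and>
    p \<ge> 5 * (ln (real k) / (\<gamma> ^ 4 * real k)) powr (1/6) \<and>
    \<tau> \<ge> real d / 2 \<and> L \<ge> 1 \<and>
    (\<forall>r<L. \<forall>s<L. (\<Sum>i\<in>S. v r i * v s i) = (if r = s then 1 else 0)) \<and>
    (\<forall>r<L. \<exists>ev. ev \<le> - \<tau> \<and> is_eigvec_on S (adj E) ev (v r)) \<and>
    (\<forall>\<mu> x. \<mu> \<le> - \<tau> \<and> is_eigvec_on S (adj E) \<mu> x \<longrightarrow>
        (\<exists>c::nat \<Rightarrow> real. \<forall>i\<in>S. x i = (\<Sum>r<L. c r * v r i))) \<and>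
    (\<Sum>r<L. (y r)\<^sup>2) = 1
    \<longrightarrow> subset_prob p S (\<lambda>N. (\<Sum>i\<in>N. (\<Sum>r<L. y r * v r i)\<^sup>2) \<ge> p / 2)
        \<ge> 1 - C / real k ^ 4"
proof (intro exI[of _ 1] allI impI)
  fix k :: nat and S :: "nat set" and E :: "nat \<Rightarrow> nat \<Rightarrow> bool" and d :: nat
    and \<gamma> p \<tau> :: real and L :: nat and v :: "nat \<Rightarrow> nat \<Rightarrow> real" and y :: "nat \<Rightarrow> real"
  assume H: "finite S \<and> card S = k \<and>
    simple_graph_on S E \<and> bipartite_on S E \<and> regular_on S E d \<and>
    real d = \<gamma> * p * real k \<and> \<gamma> \<ge> 1/2 \<and> 0 \<le> p \<and> p \<le> 1 \<and>
    p \<ge> 5 * (ln (real k) / (\<gamma> ^ 4 * real k)) powr (1/6) \<and>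
    \<tau> \<ge> real d / 2 \<and> L \<ge> 1 \<and>
    (\<forall>r<L. \<forall>s<L. (\<Sum>i\<in>S. v r i * v s i) = (if r = s then 1 else 0)) \<and>
    (\<forall>r<L. \<exists>ev. ev \<le> - \<tau> \<and> is_eigvec_on S (adj E) ev (v r)) \<and>
    (\<forall>\<mu> x. \<mu> \<le> - \<tau> \<and> is_eigvec_on S (adj E) \<mu> x \<longrightarrow>
        (\<exists>c::nat \<Rightarrow> real. \<forall>i\<in>S. x i = (\<Sum>r<L. c r * v r i))) \<and>
    (\<Sum>r<L. (y r)\<^sup>2) = 1"
  have fin: "finite S" using H by blast
  have ck: "card S = k" using H by blast
  have reg: "regular_on S E d" using H by blast
  have dk: "real d = \<gamma> * p * real k" using H by blast
  have g: "\<gamma> \<ge> 1/2" using H by blast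
  have p0: "0 \<le> p" and p1: "p \<le> 1" using H by blast+
  have plow: "p \<ge> 5 * (ln (real k) / (\<gamma> ^ 4 * real k)) powr (1/6)" using H by blast
  have tau: "\<tau> \<ge> real d / 2" using H by blast
  have L1: "L \<ge> 1" using H by blast
  have orth: "\<forall>r<L. \<forall>s<L. (\<Sum>i\<in>S. v r i * v s i) = (if r = s then 1 else 0)" using H by blast
  have eig: "\<forall>r<L. \<exists>ev. ev \<le> - \<tau> \<and> is_eigvec_on S (adj E) ev (v r)" using H by blast
  have ynorm: "(\<Sum>r<L. (y r)\<^sup>2) = 1" using H by blast
  have "(\<Sum>i\<in>S. v 0 i * v 0 i) = 1" using orth L1 by auto
  then have Sne: "S \<noteq> {}" by auto
  then have "card S > 0" using fin by (simp add: card_gt_0_iff)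
  then have k1: "k \<ge> 1" using ck by simp
  show "1 - 1 / real k ^ 4 \<le> subset_prob p S (\<lambda>N. (\<Sum>i\<in>N. (\<Sum>r<L. y r * v r i)\<^sup>2) \<ge> p / 2)"
  proof (cases "k = 1")
    case True
    then show ?thesis using sp_nonneg[OF p0 p1] by simp
  next
    case False
    then have k2: "k \<ge> 2" using k1 by simp
    have lnk: "ln (real k) > 0" using k2 by simp
    have kpos: "real k > 0" using k2 by simp
    have gpos: "\<gamma> > 0" using g by simp
    define x where "x = ln (real k) / (\<gamma> ^ 4 * real k)"
    have xpos: "x > 0" unfolding x_def using lnk kpos gpos by simp
    have "(x powr (1/6)) ^ 6 = x"
    proof -
      have "(x powr (1/6)) ^ 6 = (x powr (1/6)) powr (real 6)"
        using xpos by (simp add: powr_realpow)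
      also have "\<dots> = x" using xpos by (simp add: powr_powr)
      finally show ?thesis .
    qed
    moreover have "(5 * x powr (1/6)) ^ 6 \<le> p ^ 6"
      using plow xpos unfolding x_def[symmetric] by (intro power_mono) auto
    ultimately have p6: "15625 * x \<le> p ^ 6" by (simp add: power_mult_distrib)
    have "15625 * ln (real k) \<le> p ^ 6 * (\<gamma> ^ 4 * real k)"
    proof -
      have "15625 * x * (\<gamma> ^ 4 * real k) \<le> p ^ 6 * (\<gamma> ^ 4 * real k)"
        using p6 gpos kpos by (intro mult_right_mono) auto
      moreover have "x * (\<gamma> ^ 4 * real k) = ln (real k)" unfolding x_def using gpos kpos by simp
      ultimately show ?thesis by (simp add: mult.assoc)
    qed
    then have A: "15625 * ln (real k) \<le> (\<gamma> * p^2 * real k) * (\<gamma>^3 * p^4)"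
      by (simp add: algebra_simps power_numeral_reduce)
    obtain i0 where i0: "i0 \<in> S" using Sne by blast
    have "d = card {j\<in>S. E i0 j}" using reg i0 unfolding regular_on_def by simp
    also have "\<dots> \<le> card S" using fin by (intro card_mono) auto
    finally have "real d \<le> real k" using ck by simp
    then have "\<gamma> * p * real k \<le> 1 * real k" using dk by simp
    then have gp1: "\<gamma> * p \<le> 1" using kpos by (simp only: mult_le_cancel_right)
    have gp0: "0 \<le> \<gamma> * p" using gpos p0 by simp
    have "\<gamma>^3 * p^4 = (\<gamma> * p)^3 * p" by (simp add: algebra_simps power_numeral_reduce)
    also have "\<dots> \<le> 1" by (rule mult_le_one[OF power_le_one[OF gp0 gp1] p0 p1])
    finally have B: "\<gamma>^3 * p^4 \<le> 1" .
    have C0: "0 \<le> \<gamma> * p^2 * real k" using gpos kpos by simp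
    have "(\<gamma> * p^2 * real k) * (\<gamma>^3 * p^4) \<le> \<gamma> * p^2 * real k"
      using B C0 by (rule mult_left_le)
    with A have pd: "15625 * ln (real k) \<le> p * real d"
      using dk by (simp add: power2_eq_square algebra_simps)
    have "0 < x powr (1/6)" using xpos by simp
    then have ppos: "p > 0" using plow unfolding x_def[symmetric] by linarith
    have dpos: "real d > 0" using dk gpos ppos kpos by simp
    have "\<forall>r. \<exists>e. r < L \<longrightarrow> (e \<le> - \<tau> \<and> is_eigvec_on S (adj E) e (v r))" using eig by blast
    then obtain ev where ev: "\<And>r. r < L \<Longrightarrow> ev r \<le> - \<tau> \<and> is_eigvec_on S (adj E) (ev r) (v r)"
      by metis
    define a where "a i = (\<Sum>r<L. y r * v r i)\<^sup>2" for i
    have deloc: "a i \<le> 4 / real d" if i: "i \<in> S" for i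
    proof -
      have "a i \<le> (\<Sum>r<L. (y r)\<^sup>2) * (\<Sum>r<L. (v r i)\<^sup>2)" unfolding a_def by (rule cs_sum)
      then have a1: "a i \<le> (\<Sum>r<L. (v r i)\<^sup>2)" using ynorm by simp
      have row: "(\<Sum>j\<in>S. adj E i j * v r j) = ev r * v r i" if r: "r < L" for r
        using ev[OF r] i unfolding is_eigvec_on_def by blast
      have "(\<Sum>r<L. (\<Sum>j\<in>S. adj E i j * v r j)\<^sup>2) \<le> (\<Sum>j\<in>S. (adj E i j)\<^sup>2)"
        by (rule bessel[OF orth])
      also have "\<dots> = real d" using adj_sq_sum[OF fin] reg i unfolding regular_on_def by simp
      finally have b1: "(\<Sum>r<L. (ev r * v r i)\<^sup>2) \<le> real d" using row by simp
      have "(\<Sum>r<L. (real d / 2)\<^sup>2 * (v r i)\<^sup>2) \<le> (\<Sum>r<L. (ev r * v r i)\<^sup>2)"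
      proof (rule sum_mono)
        fix r assume "r \<in> {..<L}"
        then have "ev r \<le> - \<tau>" using ev by simp
        then have "real d / 2 \<le> - ev r" using tau by simp
        then have "(real d / 2)\<^sup>2 \<le> (- ev r)\<^sup>2" using dpos by (intro power_mono) auto
        then show "(real d / 2)\<^sup>2 * (v r i)\<^sup>2 \<le> (ev r * v r i)\<^sup>2"
          by (simp add: power_mult_distrib mult_right_mono)
      qed
      with b1 have "(real d / 2)\<^sup>2 * (\<Sum>r<L. (v r i)\<^sup>2) \<le> real d"
        by (simp add: sum_distrib_left)
      then have "(\<Sum>r<L. (v r i)\<^sup>2) \<le> real d / (real d / 2)\<^sup>2"
        using dpos by (simp add: le_divide_eq mult.commute)
      also have "\<dots> = 4 / real d" using dpos by (simp add: power2_eq_square field_simps)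
      finally show ?thesis using a1 by simp
    qed
    have sa: "(\<Sum>i\<in>S. a i) = 1" unfolding a_def using norm_comb[OF orth, of y] ynorm by simp
    define t where "t = real d / 12"
    have t0: "0 \<le> t" unfolding t_def using dpos by simp
    have ta: "t * a i \<le> 1/3" if "i \<in> S" for i
    proof -
      have "t * a i \<le> t * (4 / real d)" using deloc[OF that] t0 by (rule mult_left_mono)
      also have "\<dots> = 1/3" unfolding t_def using dpos by simp
      finally show ?thesis .
    qed
    have a0: "0 \<le> a i" for i unfolding a_def by simp
    have tl: "subset_prob p S (\<lambda>N. (\<Sum>i\<in>N. a i) \<ge> p/2) \<ge> 1 - exp (- (p * t / 4))"
      by (rule tail[OF fin p0 p1 t0 a0 ta sa])
    have "exp (- (p * t / 4)) \<le> exp (- (real 4 * ln (real k)))"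
      using pd lnk unfolding t_def by simp
    also have "\<dots> = 1 / real k ^ 4"
    proof -
      have "exp (real 4 * ln (real k)) = exp (ln (real k)) ^ 4" by (rule exp_of_nat_mult)
      also have "\<dots> = real k ^ 4" using kpos by simp
      finally show ?thesis by (simp add: exp_minus')
    qed
    finally have "1 - 1 / real k ^ 4 \<le> 1 - exp (- (p * t / 4))" by simp
    with tl show ?thesis unfolding a_def by simp
  qed
qed

end
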